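(* Let $f:\mathbb C\to\mathbb C$ be an entire function and $J\in\mathbb C^{n\times n}$ a matrix in Jordan normal form with all eigenvalues in the closed unit disk $\mathbb D$, and let $\mathcal C:=\mathsf{blkspec}(J)$. Then \[ \|f(J)(zI-J)^{-1}\|_{\mathcal H_\infty}\le H^{(\infty)}_f(\mathcal C),\qquad\|f(J)(zI-J)^{-1}\|_{\mathcal H_2^{\mathrm{op}}}\le H^{(2)}_f(\mathcal C). \] Moreover, if $f$ is a polynomial of degree at most $d$, then in the term of $H^{(q)}_f$ corresponding to any pair $(\lambda,k)$ with $d<k$, the factor $k^2$ may be replaced by $k(d+1)$.
   Context: $\mathsf{blkspec}(J)$ is the set of pairs $(\lambda,k)$ with $\lambda$ an eigenvalue and $k$ the size of an associated Jordan block. For $q\in\{2,\infty\}$ let $c_{\mathcal H_\infty}:=1$, $c_{\mathcal H_2}:=\sqrt{1+2/\pi}$, and for a finite $\mathcal C\subset\mathbb D\times\mathbb N$ define $H^{(q)}_f(\mathcal C):=\max_{(\lambda,k)\in\mathcal C}h_q(\lambda,k)$ where $h_q(\lambda,k)=0$ if $f$ has a zero of order $\ge k$ at $\lambda$; $h_q(\lambda,k)=\infty$ if $|\lambda|=1$ and $f$ has a zero of order $<k$ at $\lambda$; and otherwise $h_q(\lambda,k)=c_{\mathcal H_q}\max_{w:|w-\lambda|\le1-|\lambda|}\frac{k^2|f(w)|}{(1-|\lambda|)^{k-\mathbb I(q=2)/2}}$. For a matrix-valued rational function $\Phi$ of $z$ (simplified, i.e. removable singularities cancelled, before taking norms): $\|\Phi\|_{\mathcal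 H_\infty}:=\sup_{|z|=1}\|\Phi(z)\|_{\mathrm{op}}$ and $\|\Phi\|_{\mathcal H_2^{\mathrm{op}}}:=\max_{\|v\|_2=1}\sqrt{\frac1{2\pi}\int_0^{2\pi}\|v^\top\Phi(e^{i\theta})\|_2^2d\theta}$. *)

theory Defs
  imports "HOL-Analysis.Analysis" "HOL-Computational_Algebra.Polynomial"
          "Jordan_Normal_Form.Jordan_Normal_Form"
begin

text \<open>A matrix in Jordan normal form is represented as jordan_matrix n_as, where n_as lists
  the blocks as (size, eigenvalue) pairs, all sizes positive (the library convention of jordan_nf).
  blkspec collects the pairs (eigenvalue, block size).\<close>

definition blkspec :: "(nat \<times> complex) list \<Rightarrow> (complex \<times> nat) set" where
  "blkspec n_as = {(a, k). (k, a) \<in> set n_as}"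

definition jordan_block_fun :: "(complex \<Rightarrow> complex) \<Rightarrow> nat \<Rightarrow> complex \<Rightarrow> complex mat" where
  "jordan_block_fun f k a = mat k k (\<lambda>(i, j).
      if i \<le> j then (deriv ^^ (j - i)) f a / of_nat (fact (j - i)) else 0)"

definition jordan_matrix_fun :: "(complex \<Rightarrow> complex) \<Rightarrow> (nat \<times> complex) list \<Rightarrow> complex mat" where
  "jordan_matrix_fun f n_as = diag_block_mat (map (\<lambda>(k, a). jordan_block_fun f k a) n_as)"

definition mat_inv :: "complex mat \<Rightarrow> complex mat" where
  "mat_inv A = (SOME B. B \<in> carrier_mat (dim_row A) (dim_row A) \<and> inverts_mat A B \<and> inverts_mat B A)"

definition vec_norm2 :: "complex vec \<Rightarrow> real" where
  "vec_norm2 v = sqrt (\<Sum>i<dim_vec v. (cmod (v $ i))\<^sup>2)"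

text \<open>Spectral (operator 2-)norm; the 0 is only relevant for the degenerate 0 x 0 case.\<close>
definition op_norm :: "complex mat \<Rightarrow> real" where
  "op_norm M = Sup (insert 0 {vec_norm2 (M *\<^sub>v v) | v. v \<in> carrier_vec (dim_col M) \<and> vec_norm2 v = 1})"

text \<open>Phi(z) = f(J) (zI - J)^{-1}, defined for z not an eigenvalue of J.\<close>
definition Phi :: "(complex \<Rightarrow> complex) \<Rightarrow> (nat \<times> complex) list \<Rightarrow> complex \<Rightarrow> complex mat" where
  "Phi f n_as z = (let n = sum_list (map fst n_as) in
      jordan_matrix_fun f n_as * mat_inv (z \<cdot>\<^sub>m 1\<^sub>m n - jordan_matrix n_as))"

definition eigs :: "(nat \<times> complex) list \<Rightarrow> complex set" where
  "eigs n_as = snd ` set n_as"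

text \<open>The (finitely many)
  eigenvalues on the circle are excluded; since Phi is rational, this supremum equals that of
  the simplified function (it is infinite iff a genuine pole lies on the circle).\<close>
definition Hinf_norm :: "(complex \<Rightarrow> complex) \<Rightarrow> (nat \<times> complex) list \<Rightarrow> ereal" where
  "Hinf_norm f n_as = (SUP z \<in> sphere 0 1 - eigs n_as. ereal (op_norm (Phi f n_as z)))"

definition esqrt :: "ennreal \<Rightarrow> ereal" where
  "esqrt x = (if x = \<infinity> then \<infinity> else ereal (sqrt (enn2real x)))"

text \<open>H2^op norm: sup over unit v of sqrt((1/2pi) int_0^{2pi} ||v^T Phi(e^{it})||^2 dt); the
  integrand is set to 0 on the finitely many (null) parameters where e^{it} is an eigenvalue.\<close>
definition H2op_norm :: "(complex \<Rightarrow> complex) \<Rightarrow> (nat \<times> complex) list \<Rightarrow> ereal" where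
  "H2op_norm f n_as = (let n = sum_list (map fst n_as) in
     (SUP v \<in> {v \<in> carrier_vec n. vec_norm2 v = 1}.
        esqrt (ennreal (1 / (2 * pi)) *
          (\<integral>\<^sup>+ t. ennreal (if cis t \<in> eigs n_as then 0
                   else (vec_norm2 (transpose_mat (Phi f n_as (cis t)) *\<^sub>v v))\<^sup>2)
              \<partial>lebesgue_on {0..2*pi}))))"

text \<open>is_H2 = False gives q = infinity, is_H2 = True gives q = 2. The argument kf is the factor
  in front of |f(w)|, normally k^2 (with k the block size).\<close>
definition c_H :: "bool \<Rightarrow> real" where
  "c_H is_H2 = (if is_H2 then sqrt (1 + 2 / pi) else 1)"

definition zero_order_ge :: "(complex \<Rightarrow> complex) \<Rightarrow> complex \<Rightarrow> nat \<Rightarrow> bool" where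
  "zero_order_ge f a k \<longleftrightarrow> (\<forall>j<k. (deriv ^^ j) f a = 0)"

definition h_term :: "bool \<Rightarrow> (nat \<Rightarrow> real) \<Rightarrow> (complex \<Rightarrow> complex) \<Rightarrow> complex \<times> nat \<Rightarrow> ereal" where
  "h_term is_H2 kf f = (\<lambda>(a, k).
     if zero_order_ge f a k then 0
     else if cmod a = 1 then \<infinity>
     else ereal (c_H is_H2 *
       Sup ((\<lambda>w. kf k * cmod (f w) / (1 - cmod a) powr (real k - (if is_H2 then 1/2 else 0)))
              ` cball a (1 - cmod a))))"

text \<open>Maximum over the finite set C (0 for empty C, all terms being nonnegative).\<close>
definition H_bound :: "bool \<Rightarrow> (nat \<Rightarrow> real) \<Rightarrow> (complex \<Rightarrow> complex) \<Rightarrow> (complex \<times> nat) set \<Rightarrow> ereal" where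
  "H_bound is_H2 kf f C = Sup (insert 0 (h_term is_H2 kf f ` C))"

end

theory Submission
  imports Defs "HOL-Complex_Analysis.Complex_Analysis"
begin

definition sqn :: "complex vec \<Rightarrow> real" where
  "sqn v = (\<Sum>i<dim_vec v. (cmod (v $ i))\<^sup>2)"

lemma sqn_nonneg: "0 \<le> sqn v"
  unfolding sqn_def by (simp add: sum_nonneg)

lemma vec_norm2_sq: "(vec_norm2 v)\<^sup>2 = sqn v"
  unfolding vec_norm2_def sqn_def by (simp add: sum_nonneg)

lemma vec_norm2_sqn: "vec_norm2 v = sqrt (sqn v)"
  unfolding vec_norm2_def sqn_def by simp

lemma sum_split_add: "(\<Sum>i<m+(n::nat). g i) = (\<Sum>i<m. g i) + (\<Sum>i<n. g (m+i))"
  by (induct n) (auto simp: add.assoc)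

lemma sqn_append: "sqn (u @\<^sub>v w) = sqn u + sqn w"
proof -
  have "sqn (u @\<^sub>v w) = (\<Sum>i<dim_vec u + dim_vec w. (cmod ((u @\<^sub>v w) $ i))\<^sup>2)"
    unfolding sqn_def by simp
  also have "\<dots> = (\<Sum>i<dim_vec u. (cmod ((u @\<^sub>v w) $ i))\<^sup>2)
      + (\<Sum>i<dim_vec w. (cmod ((u @\<^sub>v w) $ (dim_vec u + i)))\<^sup>2)"
    by (rule sum_split_add)
  also have "\<dots> = sqn u + sqn w" unfolding sqn_def by simp
  finally show ?thesis .
qed

lemma mat_vec_bound:
  assumes A: "A \<in> carrier_mat nr nc" and u: "u \<in> carrier_vec nc"
    and K: "\<And>i j. i < nr \<Longrightarrow> j < nc \<Longrightarrow> cmod (A $$ (i,j)) \<le> K"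
  shows "sqn (A *\<^sub>v u) \<le> real nr * real nc * K\<^sup>2 * sqn u"
proof -
  have K0: "0 \<le> K" if "nr > 0" "nc > 0" using K[of 0 0] that by (meson norm_ge_zero order_trans)
  have row: "cmod ((A *\<^sub>v u) $ i) \<le> K * (\<Sum>j<nc. cmod (u $ j))" if i: "i < nr" for i
  proof -
    have "(A *\<^sub>v u) $ i = (\<Sum>j<nc. A $$ (i,j) * u $ j)"
      using A u i by (auto simp: scalar_prod_def lessThan_atLeast0)
    also have "cmod \<dots> \<le> (\<Sum>j<nc. cmod (A $$ (i,j)) * cmod (u $ j))"
      by (rule order_trans[OF norm_sum]) (simp add: norm_mult)
    also have "\<dots> \<le> (\<Sum>j<nc. K * cmod (u $ j))"
      by (rule sum_mono) (simp add: K i mult_right_mono)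
    finally show ?thesis by (simp add: sum_distrib_left)
  qed
  have sq: "(cmod ((A *\<^sub>v u) $ i))\<^sup>2 \<le> K\<^sup>2 * (real nc * sqn u)" if i: "i < nr" for i
  proof -
    have "(cmod ((A *\<^sub>v u) $ i))\<^sup>2 \<le> (K * (\<Sum>j<nc. cmod (u $ j)))\<^sup>2"
      using row[OF i] by (simp add: power_mono)
    also have "\<dots> = K\<^sup>2 * (\<Sum>j<nc. cmod (u $ j))\<^sup>2" by (simp add: power_mult_distrib)
    also have "\<dots> \<le> K\<^sup>2 * (real nc * sqn u)"
    proof (rule mult_left_mono)
      show "(\<Sum>j<nc. cmod (u $ j))\<^sup>2 \<le> real nc * sqn u"
        using sum_squared_le_sum_of_squares[of "\<lambda>j. cmod (u $ j)" "{..<nc}"] u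
        by (simp add: sqn_def mult.commute)
    qed simp
    finally show ?thesis .
  qed
  have "sqn (A *\<^sub>v u) = (\<Sum>i<nr. (cmod ((A *\<^sub>v u) $ i))\<^sup>2)" using A by (simp add: sqn_def)
  also have "\<dots> \<le> (\<Sum>i<nr. K\<^sup>2 * (real nc * sqn u))" by (rule sum_mono) (rule sq, simp)
  also have "\<dots> = real nr * real nc * K\<^sup>2 * sqn u" by simp
  finally show ?thesis .
qed

abbreviation dsum :: "('b \<Rightarrow> nat) \<Rightarrow> 'b list \<Rightarrow> nat" where
  "dsum d xs \<equiv> sum_list (map d xs)"

lemma diag_carrier:
  assumes "\<And>x. x \<in> set xs \<Longrightarrow> A x \<in> carrier_mat (d x) (d x)"
  shows "diag_block_mat (map A xs) \<in> carrier_mat (dsum d xs) (dsum d xs)"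
  using assms
proof (induct xs)
  case Nil then show ?case by simp
next
  case (Cons x xs)
  then have "A x \<in> carrier_mat (d x) (d x)" "diag_block_mat (map A xs) \<in> carrier_mat (dsum d xs) (dsum d xs)"
    by auto
  then show ?case by (simp add: Let_def)
qed

lemma diag_mult:
  assumes "\<And>x. x \<in> set xs \<Longrightarrow> A x \<in> carrier_mat (d x) (d x) \<and> B x \<in> carrier_mat (d x) (d x)"
  shows "diag_block_mat (map A xs) * diag_block_mat (map B xs) = diag_block_mat (map (\<lambda>x. A x * B x) xs)"
  using assms
proof (induct xs)
  case Nil then show ?case by (auto intro!: eq_matI)
next
  case (Cons x xs)
  let ?n = "dsum d xs"
  have A: "A x \<in> carrier_mat (d x) (d x)" and B: "B x \<in> carrier_mat (d x) (d x)" using Cons by auto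
  have DA: "diag_block_mat (map A xs) \<in> carrier_mat ?n ?n" by (rule diag_carrier) (use Cons in auto)
  have DB: "diag_block_mat (map B xs) \<in> carrier_mat ?n ?n" by (rule diag_carrier) (use Cons in auto)
  have DAB: "diag_block_mat (map (\<lambda>x. A x * B x) xs) \<in> carrier_mat ?n ?n" 
    by (rule diag_carrier) (use Cons.prems in \<open>fastforce intro: mult_carrier_mat\<close>)
  have IH: "diag_block_mat (map A xs) * diag_block_mat (map B xs) = diag_block_mat (map (\<lambda>x. A x * B x) xs)"
    using Cons by auto
  show ?case
    unfolding list.map diag_block_mat.simps Let_def
    using A B DA DB DAB
    by (subst mult_four_block_mat[of _ "d x" "d x" _ ?n _ ?n _ _ "d x" _ ?n]) (auto simp: IH)
qed

lemma diag_one: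
  "diag_block_mat (map (\<lambda>x. 1\<^sub>m (d x)) xs) = 1\<^sub>m (dsum d xs)"
  by (induct xs) (auto simp: Let_def)

lemma diag_minus:
  fixes A :: "'b \<Rightarrow> complex mat"
  assumes "\<And>x. x \<in> set xs \<Longrightarrow> A x \<in> carrier_mat (d x) (d x)"
  shows "z \<cdot>\<^sub>m 1\<^sub>m (dsum d xs) - diag_block_mat (map A xs) = diag_block_mat (map (\<lambda>x. z \<cdot>\<^sub>m 1\<^sub>m (d x) - A x) xs)"
  using assms
proof (induct xs)
  case Nil then show ?case by (auto intro!: eq_matI)
next
  case (Cons x xs)
  let ?n = "dsum d xs"
  have A: "A x \<in> carrier_mat (d x) (d x)" using Cons by auto
  have DA: "diag_block_mat (map A xs) \<in> carrier_mat ?n ?n" by (rule diag_carrier) (use Cons in auto)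
  have IH: "z \<cdot>\<^sub>m 1\<^sub>m ?n - diag_block_mat (map A xs) = diag_block_mat (map (\<lambda>x. z \<cdot>\<^sub>m 1\<^sub>m (d x) - A x) xs)"
    using Cons by auto
  have dims: "dim_row (A x) = d x" "dim_col (A x) = d x" "dim_row (diag_block_mat (map A xs)) = ?n"
      "dim_col (diag_block_mat (map A xs)) = ?n" using A DA by auto
  show ?case
    unfolding list.map diag_block_mat.simps Let_def IH[symmetric]
    apply (rule eq_matI)
    subgoal for i j by (cases "i < d x"; cases "j < d x") (simp_all add: dims, arith)
    by (simp_all add: dims)
qed

lemma diag_transpose:
  assumes "\<And>x. x \<in> set xs \<Longrightarrow> A x \<in> carrier_mat (d x) (d x)"
  shows "transpose_mat (diag_block_mat (map A xs)) = diag_block_mat (map (\<lambda>x. transpose_mat (A x)) xs)"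
  using assms
proof (induct xs)
  case Nil then show ?case by (auto intro!: eq_matI)
next
  case (Cons x xs)
  let ?n = "dsum d xs"
  have A: "A x \<in> carrier_mat (d x) (d x)" using Cons by auto
  have DA: "diag_block_mat (map A xs) \<in> carrier_mat ?n ?n" by (rule diag_carrier) (use Cons in auto)
  have DB: "diag_block_mat (map (\<lambda>x. transpose_mat (A x)) xs) \<in> carrier_mat ?n ?n"
    by (rule diag_carrier) (use Cons.prems in auto)
  have IH: "transpose_mat (diag_block_mat (map A xs)) = diag_block_mat (map (\<lambda>x. transpose_mat (A x)) xs)"
    using Cons by auto
  have dims: "dim_row (A x) = d x" "dim_col (A x) = d x" "dim_row (diag_block_mat (map A xs)) = ?n"
    "dim_col (diag_block_mat (map A xs)) = ?n" 
    "dim_row (diag_block_mat (map (\<lambda>x. transpose_mat (A x)) xs)) = ?n"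
    "dim_col (diag_block_mat (map (\<lambda>x. transpose_mat (A x)) xs)) = ?n"
    using A DA DB by auto
  have "transpose_mat (diag_block_mat (map A (x # xs))) = 
     four_block_mat (transpose_mat (A x)) (transpose_mat (0\<^sub>m ?n (d x))) (transpose_mat (0\<^sub>m (d x) ?n))
       (transpose_mat (diag_block_mat (map A xs)))"
    unfolding list.map diag_block_mat.simps Let_def dims
    by (rule transpose_four_block_mat) (use A DA in auto)
  also have "\<dots> = diag_block_mat (map (\<lambda>x. transpose_mat (A x)) (x # xs))"
    unfolding list.map diag_block_mat.simps Let_def IH by (simp only: dims zero_transpose_mat index_transpose_mat)
  finally show ?case .
qed

fun bsum :: "('b \<Rightarrow> nat) \<Rightarrow> ('b \<Rightarrow> real) \<Rightarrow> 'b list \<Rightarrow> complex vec \<Rightarrow> real" where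
  "bsum d \<beta> [] w = 0"
| "bsum d \<beta> (x # xs) w = \<beta> x * sqn (vec_first w (d x)) + bsum d \<beta> xs (vec_last w (dsum d xs))"

lemma sqn_split: "w \<in> carrier_vec (m + n) \<Longrightarrow> sqn w = sqn (vec_first w m) + sqn (vec_last w n)"
  using sqn_append[of "vec_first w m" "vec_last w n"] by simp

lemma diag_norm:
  assumes "\<And>x. x \<in> set xs \<Longrightarrow> A x \<in> carrier_mat (d x) (d x)"
    and "\<And>x u. x \<in> set xs \<Longrightarrow> u \<in> carrier_vec (d x) \<Longrightarrow> sqn (A x *\<^sub>v u) \<le> \<beta> x * sqn u"
    and "w \<in> carrier_vec (dsum d xs)"
  shows "sqn (diag_block_mat (map A xs) *\<^sub>v w) \<le> bsum d \<beta> xs w"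
  using assms
proof (induct xs arbitrary: w)
  case Nil then show ?case by (simp add: sqn_def)
next
  case (Cons x xs w)
  let ?n = "dsum d xs"
  let ?w1 = "vec_first w (d x)" and ?w2 = "vec_last w ?n"
  have A: "A x \<in> carrier_mat (d x) (d x)" using Cons by auto
  have DA: "diag_block_mat (map A xs) \<in> carrier_mat ?n ?n" by (rule diag_carrier) (use Cons in auto)
  have w: "w = ?w1 @\<^sub>v ?w2" using Cons.prems(3) by simp
  have dims: "dim_row (A x) = d x" "dim_col (A x) = d x" "dim_row (diag_block_mat (map A xs)) = ?n"
    "dim_col (diag_block_mat (map A xs)) = ?n" using A DA by auto
  have "diag_block_mat (map A (x # xs)) *\<^sub>v w = 
      four_block_mat (A x) (0\<^sub>m (d x) ?n) (0\<^sub>m ?n (d x)) (diag_block_mat (map A xs)) *\<^sub>v (?w1 @\<^sub>v ?w2)"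
    unfolding list.map diag_block_mat.simps Let_def dims using w by simp
  also have "\<dots> = (A x *\<^sub>v ?w1 + 0\<^sub>m (d x) ?n *\<^sub>v ?w2) @\<^sub>v (0\<^sub>m ?n (d x) *\<^sub>v ?w1 + diag_block_mat (map A xs) *\<^sub>v ?w2)"
    by (rule four_block_mat_mult_vec) (use A DA in auto)
  also have "\<dots> = (A x *\<^sub>v ?w1) @\<^sub>v (diag_block_mat (map A xs) *\<^sub>v ?w2)"
  proof -
    have z1: "0\<^sub>m (d x) ?n *\<^sub>v ?w2 = 0\<^sub>v (d x)" by (intro eq_vecI) (auto simp: scalar_prod_def)
    have z2: "0\<^sub>m ?n (d x) *\<^sub>v ?w1 = 0\<^sub>v ?n" by (intro eq_vecI) (auto simp: scalar_prod_def)
    have c1: "A x *\<^sub>v ?w1 \<in> carrier_vec (d x)" using A by auto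
    have c2: "diag_block_mat (map A xs) *\<^sub>v ?w2 \<in> carrier_vec ?n" using DA by auto
    show ?thesis unfolding z1 z2 using c1 c2 by simp
  qed
  finally have "sqn (diag_block_mat (map A (x # xs)) *\<^sub>v w) = sqn (A x *\<^sub>v ?w1) + sqn (diag_block_mat (map A xs) *\<^sub>v ?w2)"
    by (simp add: sqn_append)
  also have "\<dots> \<le> \<beta> x * sqn ?w1 + bsum d \<beta> xs ?w2"
    by (rule add_mono) (use Cons in auto)
  finally show ?case by simp
qed

lemma bsum_le:
  assumes "\<And>x. x \<in> set xs \<Longrightarrow> \<beta> x \<le> C" and "w \<in> carrier_vec (dsum d xs)"
  shows "bsum d \<beta> xs w \<le> C * sqn w"
  using assms
proof (induct xs arbitrary: w)
  case Nil then show ?case by (simp add: sqn_def)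
next
  case (Cons x xs w)
  have "bsum d \<beta> (x # xs) w \<le> C * sqn (vec_first w (d x)) + C * sqn (vec_last w (dsum d xs))"
    using Cons by (auto intro!: add_mono mult_right_mono sqn_nonneg)
  also have "\<dots> = C * sqn w" using sqn_split[of w "d x" "dsum d xs"] Cons.prems(2)
    by (simp add: distrib_left)
  finally show ?case .
qed

lemma bsum_nonneg:
  assumes "\<And>x. x \<in> set xs \<Longrightarrow> 0 \<le> \<beta> x"
  shows "0 \<le> bsum d \<beta> xs w"
  using assms by (induct xs arbitrary: w) (auto intro!: add_nonneg_nonneg mult_nonneg_nonneg sqn_nonneg)

lemma bsum_integral:
  assumes "\<And>x. x \<in> set xs \<Longrightarrow> ((\<lambda>t. \<beta> x t) has_integral J x) S"
  shows "((\<lambda>t. bsum d (\<lambda>x. \<beta> x t) xs w) has_integral bsum d J xs w) S"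
  using assms
proof (induct xs arbitrary: w)
  case Nil then show ?case by simp
next
  case (Cons x xs w)
  show ?case unfolding bsum.simps
    by (intro has_integral_add has_integral_mult_left Cons) (use Cons in auto)
qed

definition Qb :: "nat \<Rightarrow> complex \<Rightarrow> complex \<Rightarrow> complex mat" where
  "Qb k a z = mat k k (\<lambda>(i,j). if i \<le> j then 1 / (z - a) ^ (j - i + 1) else 0)"

lemma Qb_carrier: "Qb k a z \<in> carrier_mat k k" unfolding Qb_def by simp

lemma Qb_index: "i < k \<Longrightarrow> j < k \<Longrightarrow> Qb k a z $$ (i,j) = (if i \<le> j then 1 / (z - a) ^ (j - i + 1) else 0)"
  unfolding Qb_def by simp

lemma inv_pow_step: "(w::complex) \<noteq> 0 \<Longrightarrow> w * (1 / w ^ Suc m) = 1 / w ^ m"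
  by (simp add: divide_simps)

lemma zJ_index: fixes z a :: complex shows "i < k \<Longrightarrow> l < k \<Longrightarrow> (z \<cdot>\<^sub>m 1\<^sub>m k - jordan_block k a) $$ (i,l) =
   (if l = i then z - a else 0) + (if l = Suc i then -1 else 0)"
  by (auto simp: one_mat_def)

lemma zJ_carrier: "z \<cdot>\<^sub>m 1\<^sub>m k - jordan_block k (a::complex) \<in> carrier_mat k k"
  by (auto simp: jordan_block_def)

lemma Qb_right:
  assumes za: "z \<noteq> a"
  shows "(z \<cdot>\<^sub>m 1\<^sub>m k - jordan_block k a) * Qb k a z = 1\<^sub>m k"
proof (rule eq_matI)
  fix i j assume i: "i < dim_row (1\<^sub>m k :: complex mat)" and j: "j < dim_col (1\<^sub>m k :: complex mat)"
  then have i: "i < k" and j: "j < k" by auto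
  let ?q = "\<lambda>l. (if l \<le> j then 1 / (z - a) ^ (j - l + 1) else 0)"
  have "((z \<cdot>\<^sub>m 1\<^sub>m k - jordan_block k a) * Qb k a z) $$ (i,j)
      = (\<Sum>l<k. (z \<cdot>\<^sub>m 1\<^sub>m k - jordan_block k a) $$ (i,l) * Qb k a z $$ (l,j))"
    using i j zJ_carrier[of z k a] Qb_carrier[of k a z]
    by (auto simp: scalar_prod_def lessThan_atLeast0 intro!: sum.cong)
  also have "\<dots> = (\<Sum>l<k. (if l = i then (z - a) * ?q l else 0) + (if l = Suc i then - ?q l else 0))"
    using i j by (intro sum.cong) (auto simp: zJ_index Qb_index)
  also have "\<dots> = (z - a) * ?q i + (if Suc i < k then - ?q (Suc i) else 0)"
    using i by (simp add: sum.distrib)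
  also have "\<dots> = 1\<^sub>m k $$ (i,j)"
  proof -
    have zp: "(z - a) ^ n \<noteq> 0" for n using za by simp
    consider "i = j" | "i < j" | "j < i" by linarith
    then show ?thesis
    proof cases
      case 1 then show ?thesis using i j za by simp
    next
      case 2
      then have e: "j - i + 1 = Suc (j - Suc i + 1)" by simp
      have "(z - a) * ?q i = ?q (Suc i)" using 2 za unfolding e by (simp add: inv_pow_step)
      then show ?thesis using 2 i j by simp
    next
      case 3 then show ?thesis using i j by simp
    qed
  qed
  finally show "((z \<cdot>\<^sub>m 1\<^sub>m k - jordan_block k a) * Qb k a z) $$ (i,j) = 1\<^sub>m k $$ (i,j)" .
qed (auto simp: Qb_def)

lemma Qb_left:
  assumes za: "z \<noteq> a"
  shows "Qb k a z * (z \<cdot>\<^sub>m 1\<^sub>m k - jordan_block k a) = 1\<^sub>m k"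
proof (rule eq_matI)
  fix i j assume i: "i < dim_row (1\<^sub>m k :: complex mat)" and j: "j < dim_col (1\<^sub>m k :: complex mat)"
  then have i: "i < k" and j: "j < k" by auto
  let ?q = "\<lambda>l. (if i \<le> l then 1 / (z - a) ^ (l - i + 1) else 0)"
  have "(Qb k a z * (z \<cdot>\<^sub>m 1\<^sub>m k - jordan_block k a)) $$ (i,j)
      = (\<Sum>l<k. Qb k a z $$ (i,l) * (z \<cdot>\<^sub>m 1\<^sub>m k - jordan_block k a) $$ (l,j))"
    using i j zJ_carrier[of z k a] Qb_carrier[of k a z]
    by (auto simp: scalar_prod_def lessThan_atLeast0 intro!: sum.cong)
  also have "\<dots> = (\<Sum>l<k. (if l = j then (z - a) * ?q l else 0) + (if l = j - 1 \<and> 0 < j then - ?q l else 0))"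
    using i j by (intro sum.cong) (auto simp: zJ_index Qb_index)
  also have "\<dots> = (z - a) * ?q j + (if 0 < j then - ?q (j - 1) else 0)"
    using j by (simp add: sum.distrib)
  also have "\<dots> = 1\<^sub>m k $$ (i,j)"
  proof -
    have zp: "(z - a) ^ n \<noteq> 0" for n using za by simp
    consider "i = j" | "i < j" | "j < i" by linarith
    then show ?thesis
    proof cases
      case 1 then show ?thesis using i j za by auto
    next
      case 2
      then have e: "j - i + 1 = Suc (j - 1 - i + 1)" by simp
      have "(z - a) * ?q j = ?q (j - 1)" using 2 za unfolding e by (simp add: inv_pow_step)
      then show ?thesis using 2 i j by simp
    next
      case 3 then show ?thesis using i j by auto
    qed
  qed
  finally show "(Qb k a z * (z \<cdot>\<^sub>m 1\<^sub>m k - jordan_block k a)) $$ (i,j) = 1\<^sub>m k $$ (i,j)" .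
qed (auto simp: Qb_def)

lemma mat_inv_unique:
  assumes A: "A \<in> carrier_mat n n" and B: "B \<in> carrier_mat n n"
    and AB: "A * B = 1\<^sub>m n" and BA: "B * A = 1\<^sub>m n"
  shows "mat_inv A = B"
proof -
  have ex: "\<exists>C. C \<in> carrier_mat (dim_row A) (dim_row A) \<and> inverts_mat A C \<and> inverts_mat C A"
    using A B AB BA by (auto simp: inverts_mat_def)
  define C where "C = mat_inv A"
  have C: "C \<in> carrier_mat n n" "A * C = 1\<^sub>m n" "C * A = 1\<^sub>m n"
    using someI_ex[OF ex] A unfolding C_def mat_inv_def inverts_mat_def by auto
  have "B = B * (A * C)" using B C by simp
  also have "\<dots> = (B * A) * C" using A B C by (simp add: assoc_mult_mat)
  also have "\<dots> = C" using BA C by simp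
  finally show ?thesis unfolding C_def by simp
qed

lemma jordan_block_fun_carrier: "jordan_block_fun f k a \<in> carrier_mat k k"
  unfolding jordan_block_fun_def by simp

lemma Phi_diag:
  assumes z: "z \<notin> eigs n_as"
  shows "Phi f n_as z = diag_block_mat (map (\<lambda>x. jordan_block_fun f (fst x) (snd x) * Qb (fst x) (snd x) z) n_as)"
proof -
  let ?n = "dsum fst n_as"
  let ?J = "\<lambda>x. jordan_block (fst x) (snd x) :: complex mat"
  let ?Q = "\<lambda>x. Qb (fst x) (snd x) z"
  let ?F = "\<lambda>x. jordan_block_fun f (fst x) (snd x)"
  have J: "jordan_matrix n_as = diag_block_mat (map ?J n_as)"
    unfolding jordan_matrix_def by (simp add: split_def)
  have F: "jordan_matrix_fun f n_as = diag_block_mat (map ?F n_as)"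
    unfolding jordan_matrix_fun_def by (simp add: split_def)
  have Jc: "\<And>x. ?J x \<in> carrier_mat (fst x) (fst x)" by (simp add: jordan_block_def)
  have Qc: "\<And>x. ?Q x \<in> carrier_mat (fst x) (fst x)" by (rule Qb_carrier)
  have Fc: "\<And>x. ?F x \<in> carrier_mat (fst x) (fst x)" by (rule jordan_block_fun_carrier)
  have zJc: "\<And>x. z \<cdot>\<^sub>m 1\<^sub>m (fst x) - ?J x \<in> carrier_mat (fst x) (fst x)" by (rule zJ_carrier)
  have za: "\<And>x. x \<in> set n_as \<Longrightarrow> z \<noteq> snd x" using z unfolding eigs_def by force
  have M: "z \<cdot>\<^sub>m 1\<^sub>m ?n - jordan_matrix n_as = diag_block_mat (map (\<lambda>x. z \<cdot>\<^sub>m 1\<^sub>m (fst x) - ?J x) n_as)"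
    unfolding J by (rule diag_minus) (rule Jc)
  have MQ: "(z \<cdot>\<^sub>m 1\<^sub>m ?n - jordan_matrix n_as) * diag_block_mat (map ?Q n_as) = 1\<^sub>m ?n"
  proof -
    have e: "map (\<lambda>x. (z \<cdot>\<^sub>m 1\<^sub>m (fst x) - ?J x) * ?Q x) n_as = map (\<lambda>x. 1\<^sub>m (fst x)) n_as"
      by (intro list.map_cong0) (simp add: Qb_right za)
    show ?thesis unfolding M by (subst diag_mult[where d=fst]) (use zJc Qc in auto, simp only: e diag_one)
  qed
  have QM: "diag_block_mat (map ?Q n_as) * (z \<cdot>\<^sub>m 1\<^sub>m ?n - jordan_matrix n_as) = 1\<^sub>m ?n"
  proof -
    have e: "map (\<lambda>x. ?Q x * (z \<cdot>\<^sub>m 1\<^sub>m (fst x) - ?J x)) n_as = map (\<lambda>x. 1\<^sub>m (fst x)) n_as"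
      by (intro list.map_cong0) (simp add: Qb_left za)
    show ?thesis unfolding M by (subst diag_mult[where d=fst]) (use zJc Qc in auto, simp only: e diag_one)
  qed
  have inv: "mat_inv (z \<cdot>\<^sub>m 1\<^sub>m ?n - jordan_matrix n_as) = diag_block_mat (map ?Q n_as)"
    by (rule mat_inv_unique[OF _ _ MQ QM]) (auto simp: M intro!: diag_carrier zJc Qc)
  show ?thesis
    unfolding Phi_def Let_def inv F
    by (rule diag_mult[where d=fst]) (use Fc Qc in auto)
qed

lemma aux_pow_bound:
  fixes r \<rho> B :: real
  assumes r: "0 < r" "r \<le> 1" "r \<le> \<rho>" and B: "0 \<le> B" and mp: "m + p \<le> K"
  shows "B / r ^ m * (1 / \<rho> ^ (p + 1)) \<le> B / (r ^ K * \<rho>)"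
proof -
  have \<rho>: "0 < \<rho>" using r by linarith
  have "r ^ K \<le> r ^ (m + p)" by (rule power_decreasing) (use r mp in auto)
  then have "r ^ K * \<rho> \<le> r ^ (m + p) * \<rho>" using \<rho> by (simp add: mult_right_mono)
  also have "\<dots> = r ^ m * r ^ p * \<rho>" by (simp add: power_add)
  also have "\<dots> \<le> r ^ m * \<rho> ^ p * \<rho>"
    using r \<rho> by (intro mult_right_mono mult_left_mono power_mono) auto
  also have "\<dots> = r ^ m * \<rho> ^ (p + 1)" by simp
  finally have le: "r ^ K * \<rho> \<le> r ^ m * \<rho> ^ (p + 1)" .
  have "B / r ^ m * (1 / \<rho> ^ (p + 1)) = B / (r ^ m * \<rho> ^ (p + 1))" by simp
  also have "\<dots> \<le> B / (r ^ K * \<rho>)"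
    by (rule divide_left_mono[OF le B]) (use r \<rho> in auto)
  finally show ?thesis .
qed

lemma block_entry_bound:
  fixes f :: "complex \<Rightarrow> complex" and kf B :: real
  assumes entire: "f holomorphic_on UNIV" and a1: "cmod a < 1" and z1: "cmod z = 1"
    and Bf: "\<And>w. cmod (a - w) = 1 - cmod a \<Longrightarrow> cmod (f w) \<le> B"
    and card: "\<And>i. i < k \<Longrightarrow> real (card {l. l < k \<and> i \<le> l \<and> (deriv ^^ (l - i)) f a \<noteq> 0}) * real k \<le> kf"
    and i: "i < k" and j: "j < k"
  shows "cmod ((jordan_block_fun f k a * Qb k a z) $$ (i,j)) \<le> kf * B / (real k * ((1 - cmod a) ^ (k - 1) * cmod (z - a)))"
proof -
  define r where "r = 1 - cmod a"
  define \<rho> where "\<rho> = cmod (z - a)"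
  have r: "0 < r" "r \<le> 1" using a1 unfolding r_def by auto
  have r\<rho>: "r \<le> \<rho>" unfolding r_def \<rho>_def using z1 norm_triangle_ineq2[of z a] by simp
  have \<rho>: "0 < \<rho>" using r r\<rho> by linarith
  have B0: "0 \<le> B"
  proof -
    have "cmod (a - (a - of_real r)) = r" using r by simp
    then have "cmod (a - (a - of_real r)) = 1 - cmod a" unfolding r_def .
    from Bf[OF this] show ?thesis by (meson norm_ge_zero order_trans)
  qed
  have cauchy: "cmod ((deriv ^^ n) f a) \<le> fact n * B / r ^ n" for n
  proof (rule Cauchy_inequality)
    show "f holomorphic_on ball a r" using entire by (rule holomorphic_on_subset) auto
    show "continuous_on (cball a r) f"
      using entire holomorphic_on_imp_continuous_on continuous_on_subset by blast
  qed (use r Bf r_def in auto)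
  define L where "L = {l. l < k \<and> i \<le> l \<and> (deriv ^^ (l - i)) f a \<noteq> 0}"
  define c where "c = B / (r ^ (k - 1) * \<rho>)"
  have trm: "cmod (jordan_block_fun f k a $$ (i,l) * Qb k a z $$ (l,j)) \<le> (if l \<in> L then c else 0)"
    if l: "l < k" for l
  proof (cases "l \<in> L \<and> l \<le> j")
    case True
    then have il: "i \<le> l" and lj: "l \<le> j" unfolding L_def by auto
    have "cmod (jordan_block_fun f k a $$ (i,l) * Qb k a z $$ (l,j))
        = cmod ((deriv ^^ (l - i)) f a) / fact (l - i) * (1 / \<rho> ^ (j - l + 1))"
      using i j l il lj unfolding jordan_block_fun_def Qb_def \<rho>_def
      by (simp add: norm_mult norm_divide norm_power)
    also have "\<dots> \<le> (fact (l - i) * B / r ^ (l - i)) / fact (l - i) * (1 / \<rho> ^ (j - l + 1))"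
      by (intro mult_right_mono divide_right_mono cauchy) (use \<rho> in auto)
    also have "\<dots> = B / r ^ (l - i) * (1 / \<rho> ^ (j - l + 1))" by simp
    also have "\<dots> \<le> c" unfolding c_def
      by (rule aux_pow_bound) (use r r\<rho> B0 il lj j in auto)
    finally show ?thesis using True by simp
  next
    case False
    then consider "l \<notin> L" | "j < l" by linarith
    then have "jordan_block_fun f k a $$ (i,l) * Qb k a z $$ (l,j) = 0"
    proof cases
      case 1 then show ?thesis using i l j unfolding L_def jordan_block_fun_def by auto
    next
      case 2 then show ?thesis using i l j unfolding Qb_def by auto
    qed
    then have p0: "cmod (jordan_block_fun f k a $$ (i,l) * Qb k a z $$ (l,j)) = 0" by (simp only: norm_zero)
    have "0 \<le> c" unfolding c_def using B0 r \<rho> by simp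
    then show ?thesis unfolding p0 by simp
  qed
  have c0: "0 \<le> c" unfolding c_def using B0 r \<rho> by simp
  have "(jordan_block_fun f k a * Qb k a z) $$ (i,j) = (\<Sum>l<k. jordan_block_fun f k a $$ (i,l) * Qb k a z $$ (l,j))"
    using i j jordan_block_fun_carrier[of f k a] Qb_carrier[of k a z]
    by (auto simp: scalar_prod_def lessThan_atLeast0 intro!: sum.cong)
  also have "cmod \<dots> \<le> (\<Sum>l<k. cmod (jordan_block_fun f k a $$ (i,l) * Qb k a z $$ (l,j)))"
    by (rule norm_sum)
  also have "\<dots> \<le> (\<Sum>l<k. if l \<in> L then c else 0)" by (rule sum_mono) (rule trm, simp)
  also have "\<dots> = real (card L) * c"
  proof -
    have "L \<subseteq> {..<k}" unfolding L_def by auto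
    then have "(\<Sum>l<k. if l \<in> L then c else 0) = (\<Sum>l\<in>L. c)"
      by (simp add: sum.If_cases Int_absorb1)
    then show ?thesis by simp
  qed
  also have "\<dots> \<le> kf / real k * c"
  proof -
    have k: "0 < k" using i by simp
    have "real (card L) \<le> kf / real k" using card[OF i] k unfolding L_def by (simp add: field_simps)
    then have "real (card L) * c \<le> kf / real k * c" using c0 by (rule mult_right_mono)
    then show ?thesis by simp
  qed
  also have "\<dots> = kf * B / (real k * ((1 - cmod a) ^ (k - 1) * cmod (z - a)))"
    unfolding c_def r_def \<rho>_def by simp
  finally show ?thesis .
qed

lemma circ_id:
  fixes u a :: complex
  assumes u: "cmod u = 1" and a: "cmod a < 1"
  shows "u / ((1 - cnj a * u) * (u - a)) = of_real (1 / (cmod (u - a))\<^sup>2)"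
proof -
  have uu: "u * cnj u = 1" using complex_norm_square[of u] u by simp
  have ua: "u - a \<noteq> 0" using u a by auto
  have e1: "1 - cnj a * u = u * cnj (u - a)" using uu by (simp add: algebra_simps)
  have e2: "of_real ((cmod (u - a))\<^sup>2) = (u - a) * cnj (u - a)" by (rule complex_norm_square)
  have u0: "u \<noteq> 0" using u by auto
  have c0: "cnj (u - a) \<noteq> 0" using ua by simp
  have "u / ((1 - cnj a * u) * (u - a)) = 1 / ((u - a) * cnj (u - a))"
  proof -
    have "u / ((u * cnj (u - a)) * (u - a)) = u / (u * (cnj (u - a) * (u - a)))" by (simp add: mult.assoc)
    also have "\<dots> = 1 / (cnj (u - a) * (u - a))" using u0 by simp
    finally show ?thesis unfolding e1 by (simp add: mult.commute)
  qed
  also have "\<dots> = of_real (1 / (cmod (u - a))\<^sup>2)" unfolding e2[symmetric] by simp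
  finally show ?thesis .
qed

lemma poisson_integral:
  fixes a :: complex
  assumes a: "cmod a < 1"
  shows "((\<lambda>t. 1 / (cmod (cis t - a))\<^sup>2) has_integral (2 * pi / (1 - (cmod a)\<^sup>2))) {0..2*pi}"
proof -
  define h where "h = (\<lambda>u. 1 / (1 - cnj a * u))"
  have hol: "h holomorphic_on cball 0 1"
  proof -
    have "1 - cnj a * u \<noteq> 0" if "u \<in> cball 0 1" for u
    proof
      assume "1 - cnj a * u = 0"
      then have "cmod (cnj a * u) = 1" by (metis norm_one right_minus_eq)
      moreover have "cmod (cnj a * u) < 1"
      proof -
        have "cmod a * cmod u \<le> cmod a" using that mult_left_le[of "cmod u" "cmod a"] by auto
        then show ?thesis using a by (simp add: norm_mult)
      qed
      ultimately show False by simp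
    qed
    then show ?thesis unfolding h_def by (intro holomorphic_intros) auto
  qed
  have "((\<lambda>u. h u / (u - a)) has_contour_integral (2 * of_real pi * \<i> * h a)) (circlepath 0 1)"
    by (rule Cauchy_integral_circlepath_simple[OF hol]) (use a in simp)
  then have I1: "((\<lambda>x. h (circlepath 0 1 x) / (circlepath 0 1 x - a) * vector_derivative (circlepath 0 1) (at x))
      has_integral (2 * of_real pi * \<i> * h a)) {0..1}"
    by (simp add: has_contour_integral)
  define \<psi> where "\<psi> = (\<lambda>x::real. 1 / (cmod (cis (2 * pi * x) - a))\<^sup>2)"
  have pt: "h (circlepath 0 1 x) / (circlepath 0 1 x - a) * vector_derivative (circlepath 0 1) (at x)
      = (2 * of_real pi * \<i>) * of_real (\<psi> x)" for x
  proof -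
    define u where "u = cis (2 * pi * x)"
    have cu: "circlepath 0 1 x = u" unfolding circlepath u_def by (simp add: cis_conv_exp mult_ac)
    have du: "vector_derivative (circlepath 0 1) (at x) = 2 * pi * \<i> * u"
      unfolding vector_derivative_circlepath u_def by (simp add: cis_conv_exp mult_ac)
    have "h u / (u - a) * (2 * pi * \<i> * u) = (2 * of_real pi * \<i>) * (u / ((1 - cnj a * u) * (u - a)))"
      unfolding h_def by (simp add: field_simps)
    also have "\<dots> = (2 * of_real pi * \<i>) * of_real (\<psi> x)"
      unfolding \<psi>_def u_def[symmetric] by (subst circ_id) (use a u_def in auto)
    finally show ?thesis unfolding cu du .
  qed
  have I2: "((\<lambda>x. (2 * of_real pi * \<i>) * of_real (\<psi> x)) has_integral (2 * of_real pi * \<i> * h a)) {0..1}"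
    using I1 unfolding pt .
  have I3: "((\<lambda>x. of_real (\<psi> x) :: complex) has_integral h a) {0..1}"
    using has_integral_mult_right[OF I2, of "1 / (2 * of_real pi * \<i>)"] by (simp add: field_simps)
  have ha: "h a = of_real (1 / (1 - (cmod a)\<^sup>2))"
    unfolding h_def using complex_norm_square[of a] by (simp add: mult.commute)
  have I4: "(\<psi> has_integral (1 / (1 - (cmod a)\<^sup>2))) {0..1}"
    using has_integral_linear[OF I3 bounded_linear_Re] unfolding ha by (simp add: o_def)
  have img: "(\<lambda>x. x / (2 * pi)) ` {0..2 * pi} = {0..1}"
  proof (intro equalityI subsetI)
    fix y assume "y \<in> {0..(1::real)}"
    then show "y \<in> (\<lambda>x. x / (2 * pi)) ` {0..2 * pi}"
      by (intro image_eqI[of _ _ "2 * pi * y"]) auto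
  qed auto
  have "((\<lambda>x. 1 / (cmod (cis (2 * pi * x) - a))\<^sup>2) has_integral (1 / (1 - (cmod a)\<^sup>2))) ((\<lambda>x. x / (2 * pi)) ` {0..2 * pi})"
    using I4 unfolding img \<psi>_def .
  then have "((\<lambda>t. 1 / (cmod (cis t - a))\<^sup>2) has_integral (\<bar>2 * pi\<bar> *\<^sub>R (1 / (1 - (cmod a)\<^sup>2)))) {0..2 * pi}"
    by (subst has_integral_stretch_real_iff[symmetric, where m = "2 * pi"]) auto
  then show ?thesis by simp
qed

lemma block_norm:
  fixes f :: "complex \<Rightarrow> complex" and kf B :: real
  assumes entire: "f holomorphic_on UNIV" and a1: "cmod a < 1" and z1: "cmod z = 1"
    and Bf: "\<And>w. cmod (a - w) = 1 - cmod a \<Longrightarrow> cmod (f w) \<le> B"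
    and card: "\<And>i. i < k \<Longrightarrow> real (card {l. l < k \<and> i \<le> l \<and> (deriv ^^ (l - i)) f a \<noteq> 0}) * real k \<le> kf"
    and k: "0 < k" and u: "u \<in> carrier_vec k"
  shows "sqn ((jordan_block_fun f k a * Qb k a z) *\<^sub>v u) \<le> (kf * B / ((1 - cmod a) ^ (k - 1) * cmod (z - a)))\<^sup>2 * sqn u"
    and "sqn (transpose_mat (jordan_block_fun f k a * Qb k a z) *\<^sub>v u) \<le> (kf * B / ((1 - cmod a) ^ (k - 1) * cmod (z - a)))\<^sup>2 * sqn u"
proof -
  let ?P = "jordan_block_fun f k a * Qb k a z"
  let ?K = "kf * B / (real k * ((1 - cmod a) ^ (k - 1) * cmod (z - a)))"
  have Pc: "?P \<in> carrier_mat k k" using jordan_block_fun_carrier Qb_carrier by (rule mult_carrier_mat)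
  have e: "real k * real k * ?K\<^sup>2 = (kf * B / ((1 - cmod a) ^ (k - 1) * cmod (z - a)))\<^sup>2"
    using k by (simp add: power2_eq_square field_simps)
  have "sqn (?P *\<^sub>v u) \<le> real k * real k * ?K\<^sup>2 * sqn u"
    by (rule mat_vec_bound[OF Pc u]) (rule block_entry_bound[OF entire a1 z1 Bf card], auto)
  then show "sqn (?P *\<^sub>v u) \<le> (kf * B / ((1 - cmod a) ^ (k - 1) * cmod (z - a)))\<^sup>2 * sqn u" unfolding e .
  have Tc: "transpose_mat ?P \<in> carrier_mat k k" using Pc by simp
  have "sqn (transpose_mat ?P *\<^sub>v u) \<le> real k * real k * ?K\<^sup>2 * sqn u"
  proof (rule mat_vec_bound[OF Tc u])
    fix i j assume ij: "i < k" "j < k"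
    have d: "dim_row ?P = k" "dim_col ?P = k" using Pc by auto
    have "transpose_mat ?P $$ (i, j) = ?P $$ (j, i)" using ij by (simp only: index_transpose_mat d)
    then show "cmod (transpose_mat ?P $$ (i, j)) \<le> ?K"
      using block_entry_bound[OF entire a1 z1 Bf card, of j i] ij by simp
  qed
  then show "sqn (transpose_mat ?P *\<^sub>v u) \<le> (kf * B / ((1 - cmod a) ^ (k - 1) * cmod (z - a)))\<^sup>2 * sqn u" unfolding e .
qed

lemma zero_block:
  assumes "zero_order_ge f a k"
  shows "jordan_block_fun f k a = 0\<^sub>m k k"
  using assms unfolding zero_order_ge_def jordan_block_fun_def
  by (intro eq_matI) auto

lemma c_H_ge1: "1 \<le> c_H e"
  unfolding c_H_def by auto

lemma blk:
  fixes f :: "complex \<Rightarrow> complex" and kf :: "nat \<Rightarrow> real" and Hb :: real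
  assumes entire: "f holomorphic_on UNIV" and k: "0 < k" and a1: "cmod a \<le> 1"
    and card: "\<And>i. i < k \<Longrightarrow> real (card {l. l < k \<and> i \<le> l \<and> (deriv ^^ (l - i)) f a \<noteq> 0}) * real k \<le> kf k"
    and kfpos: "0 < kf k"
    and h: "h_term e kf f (a, k) \<le> ereal Hb"
  shows "\<exists>S\<ge>0. (\<forall>z. cmod z = 1 \<longrightarrow> z \<noteq> a \<longrightarrow> (\<forall>u\<in>carrier_vec k.
            sqn ((jordan_block_fun f k a * Qb k a z) *\<^sub>v u) \<le> (S / cmod (z - a))\<^sup>2 * sqn u \<and>
            sqn (transpose_mat (jordan_block_fun f k a * Qb k a z) *\<^sub>v u) \<le> (S / cmod (z - a))\<^sup>2 * sqn u))
          \<and> (0 < S \<longrightarrow> cmod a < 1) \<and> S \<le> Hb * (1 - cmod a) powr (if e then 1/2 else 1)"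
proof (cases "zero_order_ge f a k")
  case True
  then have "h_term e kf f (a, k) = 0" unfolding h_term_def by simp
  then have Hb: "0 \<le> Hb" using h by simp
  have P0: "jordan_block_fun f k a * Qb k a z = 0\<^sub>m k k" for z
    unfolding zero_block[OF True] using Qb_carrier[of k a z] by simp
  have z1: "sqn (0\<^sub>m k k *\<^sub>v u) = 0" if "u \<in> carrier_vec k" for u :: "complex vec"
  proof -
    have "0\<^sub>m k k *\<^sub>v u = 0\<^sub>v k" using that by (intro eq_vecI) (auto simp: scalar_prod_def intro!: sum.neutral)
    then show ?thesis by (simp add: sqn_def)
  qed
  show ?thesis
  proof (intro exI[of _ 0] conjI allI impI ballI)
    show "(0::real) \<le> 0" by simp
    show "0 \<le> Hb * (1 - cmod a) powr (if e then 1 / 2 else 1)" using Hb by simp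
  next
    fix z and u :: "complex vec" assume u: "u \<in> carrier_vec k"
    show "sqn ((jordan_block_fun f k a * Qb k a z) *\<^sub>v u) \<le> (0 / cmod (z - a))\<^sup>2 * sqn u"
      unfolding P0 z1[OF u] by simp
    show "sqn (transpose_mat (jordan_block_fun f k a * Qb k a z) *\<^sub>v u) \<le> (0 / cmod (z - a))\<^sup>2 * sqn u"
      unfolding P0 zero_transpose_mat z1[OF u] by simp
  qed simp
next
  case False
  define r where "r = 1 - cmod a"
  define E where "E = (if e then 1/2 else (0::real))"
  define g where "g = (\<lambda>w. kf k * cmod (f w) / r powr (real k - E))"
  define Bh where "Bh = Sup (g ` cball a r)"
  have "h_term e kf f (a, k) = (if cmod a = 1 then \<infinity> else ereal (c_H e * Bh))"
    using False unfolding h_term_def Bh_def g_def r_def E_def by simp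
  with h have a1': "cmod a \<noteq> 1" and cB: "c_H e * Bh \<le> Hb" by (auto split: if_splits)
  then have a1: "cmod a < 1" using a1 by simp
  have r: "0 < r" "r \<le> 1" unfolding r_def using a1 by auto
  have contf: "continuous_on UNIV f" using entire holomorphic_on_imp_continuous_on by blast
  have contf': "continuous_on (cball a r) f" using continuous_on_subset[OF contf] by blast
  have contg: "continuous_on (cball a r) g" unfolding g_def
    by (intro continuous_on_divide continuous_on_mult continuous_on_const continuous_on_norm contf') (use r in auto)
  have bdd: "bdd_above (g ` cball a r)"
    by (intro bounded_imp_bdd_above compact_imp_bounded compact_continuous_image contg) simp
  have gle: "g w \<le> Bh" if "w \<in> cball a r" for w
    unfolding Bh_def by (rule cSup_upper) (use that bdd in auto)
  have Bh0: "0 \<le> Bh"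
  proof -
    have "0 \<le> g a" unfolding g_def using kfpos r by simp
    also have "\<dots> \<le> Bh" by (rule gle) (use r in simp)
    finally show ?thesis .
  qed
  have BhHb: "Bh \<le> Hb"
  proof -
    have "Bh \<le> c_H e * Bh" using c_H_ge1[of e] Bh0 by (simp add: mult_le_cancel_right1)
    then show ?thesis using cB by simp
  qed
  define S where "S = Bh * r powr (1 - E)"
  define B where "B = S * r ^ (k - 1) / kf k"
  have rp: "r powr (real k - E) = r powr (1 - E) * r ^ (k - 1)"
  proof -
    have eq: "real k - E = (1 - E) + real (k - 1)" using k by (simp add: of_nat_diff)
    have "r powr (real k - E) = r powr ((1 - E) + real (k - 1))" unfolding eq ..
    also have "\<dots> = r powr (1 - E) * r powr real (k - 1)" by (rule powr_add)
    also have "r powr real (k - 1) = r ^ (k - 1)" using r(1) by (rule powr_realpow)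
    finally show ?thesis .
  qed
  have Bf: "cmod (f w) \<le> B" if w: "cmod (a - w) = 1 - cmod a" for w
  proof -
    have "w \<in> cball a r" using w unfolding r_def by (simp add: dist_norm)
    then have "g w \<le> Bh" by (rule gle)
    then have "kf k * cmod (f w) \<le> Bh * r powr (real k - E)"
      unfolding g_def using r by (simp add: divide_le_eq)
    then have "cmod (f w) \<le> Bh * r powr (real k - E) / kf k"
      using kfpos by (simp add: le_divide_eq mult.commute)
    also have "\<dots> = B" unfolding B_def S_def rp by (simp add: mult_ac)
    finally show ?thesis .
  qed
  have KB: "kf k * B / (r ^ (k - 1)) = S" unfolding B_def using kfpos r by simp
  show ?thesis
  proof (intro exI[of _ S] conjI allI impI ballI)
    show "0 \<le> S" unfolding S_def using Bh0 r by simp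
    show "cmod a < 1" using a1 .
    have e1: "1 - E = (if e then 1 / 2 else 1)" unfolding E_def by simp
    show "S \<le> Hb * (1 - cmod a) powr (if e then 1 / 2 else 1)"
      unfolding S_def e1 r_def[symmetric] using BhHb by (rule mult_right_mono) simp
  next
    fix z and u :: "complex vec" assume z1: "cmod z = 1" and za: "z \<noteq> a" and u: "u \<in> carrier_vec k"
    have e1: "kf k * B / ((1 - cmod a) ^ (k - 1) * cmod (z - a)) = S / cmod (z - a)"
    proof -
      have "kf k * B / ((1 - cmod a) ^ (k - 1) * cmod (z - a)) = kf k * B / r ^ (k - 1) / cmod (z - a)"
        unfolding r_def by (simp only: divide_divide_eq_left)
      then show ?thesis unfolding KB .
    qed
    show "sqn ((jordan_block_fun f k a * Qb k a z) *\<^sub>v u) \<le> (S / cmod (z - a))\<^sup>2 * sqn u"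
      using block_norm(1)[OF entire a1 z1 Bf card k u] unfolding e1 .
    show "sqn (transpose_mat (jordan_block_fun f k a * Qb k a z) *\<^sub>v u) \<le> (S / cmod (z - a))\<^sup>2 * sqn u"
      using block_norm(2)[OF entire a1 z1 Bf card k u] unfolding e1 .
  qed
qed

lemma esqrt_le:
  assumes Y: "Y \<le> ennreal (Hb\<^sup>2)" and Hb: "0 \<le> Hb"
  shows "esqrt Y \<le> ereal Hb"
proof -
  have "Y \<noteq> \<infinity>" using Y by (metis ennreal_less_top infinity_ennreal_def top.extremum_uniqueI top.not_eq_extremum)
  moreover have "enn2real Y \<le> Hb\<^sup>2" by (rule enn2real_leI) (use Y in auto)
  ultimately show ?thesis unfolding esqrt_def using Hb real_sqrt_le_mono[of "enn2real Y" "Hb\<^sup>2"] by auto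
qed

lemma nn_integral_on_interval:
  fixes g :: "real \<Rightarrow> real"
  assumes nn: "\<And>t. t \<in> {a..b} \<Longrightarrow> 0 \<le> g t" and I: "(g has_integral I) {a..b}"
  shows "(\<integral>\<^sup>+ t. ennreal (g t) \<partial>lebesgue_on {a..b}) = ennreal I"
proof -
  have "(\<integral>\<^sup>+ t. ennreal (g t) \<partial>lebesgue_on {a..b}) = (\<integral>\<^sup>+ t. ennreal (g t) * indicator {a..b} t \<partial>lebesgue)"
    by (rule nn_integral_restrict_space) auto
  also have "\<dots> = (\<integral>\<^sup>+ t. ennreal (g t) * indicator {a..b} t \<partial>lborel)"
    by (rule nn_integral_completion)
  also have "\<dots> = ennreal I" by (rule nn_integral_has_integral_lebesgue'[OF nn I])
  finally show ?thesis .
qed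

definition blkprop :: "bool \<Rightarrow> (complex \<Rightarrow> complex) \<Rightarrow> real \<Rightarrow> nat \<times> complex \<Rightarrow> real \<Rightarrow> bool" where
  "blkprop e f Hb x S \<longleftrightarrow> 0 \<le> S \<and> (\<forall>z. cmod z = 1 \<longrightarrow> z \<noteq> snd x \<longrightarrow> (\<forall>u\<in>carrier_vec (fst x).
            sqn ((jordan_block_fun f (fst x) (snd x) * Qb (fst x) (snd x) z) *\<^sub>v u) \<le> (S / cmod (z - snd x))\<^sup>2 * sqn u \<and>
            sqn (transpose_mat (jordan_block_fun f (fst x) (snd x) * Qb (fst x) (snd x) z) *\<^sub>v u) \<le> (S / cmod (z - snd x))\<^sup>2 * sqn u))
          \<and> (0 < S \<longrightarrow> cmod (snd x) < 1) \<and> S \<le> Hb * (1 - cmod (snd x)) powr (if e then 1/2 else 1)"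

lemma blk_all:
  fixes f :: "complex \<Rightarrow> complex" and kf :: "nat \<Rightarrow> real" and Hb :: real
  assumes entire: "f holomorphic_on UNIV"
    and jnf: "0 \<notin> fst ` set n_as"
    and disk: "\<forall>(k, a) \<in> set n_as. cmod a \<le> 1"
    and card: "\<And>x i. x \<in> set n_as \<Longrightarrow> i < fst x \<Longrightarrow>
        real (card {l. l < fst x \<and> i \<le> l \<and> (deriv ^^ (l - i)) f (snd x) \<noteq> 0}) * real (fst x) \<le> kf (fst x)"
    and kfpos: "\<And>x. x \<in> set n_as \<Longrightarrow> 0 < kf (fst x)"
    and h: "\<And>x. x \<in> set n_as \<Longrightarrow> h_term e kf f (snd x, fst x) \<le> ereal Hb"
  obtains Sf where "\<And>x. x \<in> set n_as \<Longrightarrow> blkprop e f Hb x (Sf x)"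
proof -
  have "\<forall>x\<in>set n_as. \<exists>S. blkprop e f Hb x S"
  proof
    fix x assume x: "x \<in> set n_as"
    obtain k a where xa: "x = (k, a)" by (cases x)
    have k: "0 < k" using jnf x xa by (metis fst_conv gr0I image_eqI)
    have a: "cmod a \<le> 1" using disk x xa by auto
    from blk[OF entire k a card[OF x, unfolded xa fst_conv snd_conv] kfpos[OF x, unfolded xa fst_conv] h[OF x, unfolded xa fst_conv snd_conv]]
    show "\<exists>S. blkprop e f Hb x S" unfolding blkprop_def xa fst_conv snd_conv by blast
  qed
  then obtain Sf where "\<forall>x\<in>set n_as. blkprop e f Hb x (Sf x)" by (rule bchoice[elim_format]) blast
  then show ?thesis using that by blast
qed

lemma main_inf:
  fixes f :: "complex \<Rightarrow> complex" and kf :: "nat \<Rightarrow> real" and Hb :: real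
  assumes disk: "\<forall>(k, a) \<in> set n_as. cmod a \<le> 1"
    and Hb: "0 \<le> Hb"
    and Sf: "\<And>x. x \<in> set n_as \<Longrightarrow> blkprop False f Hb x (Sf x)"
  shows "Hinf_norm f n_as \<le> ereal Hb"
  unfolding Hinf_norm_def
proof (rule SUP_least)
  fix z assume z: "z \<in> sphere 0 1 - eigs n_as"
  then have z1: "cmod z = 1" and zn: "z \<notin> eigs n_as" by auto
  have za: "\<And>x. x \<in> set n_as \<Longrightarrow> z \<noteq> snd x" using zn unfolding eigs_def by force
  let ?n = "dsum fst n_as"
  let ?P = "\<lambda>x. jordan_block_fun f (fst x) (snd x) * Qb (fst x) (snd x) z"
  let ?\<beta> = "\<lambda>x. (Sf x / cmod (z - snd x))\<^sup>2"
  have Pc: "\<And>x. ?P x \<in> carrier_mat (fst x) (fst x)"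
    using jordan_block_fun_carrier Qb_carrier by (rule mult_carrier_mat)
  have Phi: "Phi f n_as z = diag_block_mat (map ?P n_as)" by (rule Phi_diag[OF zn])
  have PhiC: "Phi f n_as z \<in> carrier_mat ?n ?n" unfolding Phi by (rule diag_carrier) (rule Pc)
  have \<beta>le: "?\<beta> x \<le> Hb\<^sup>2" if x: "x \<in> set n_as" for x
  proof -
    define a where "a = snd x"
    have a1: "cmod a \<le> 1" using disk x unfolding a_def by auto
    have S: "0 \<le> Sf x" "Sf x \<le> Hb * (1 - cmod a) powr 1" using Sf[OF x] unfolding blkprop_def a_def by auto
    have S': "Sf x \<le> Hb * (1 - cmod a)" using S(2) a1 by (simp add: powr_one)
    have \<rho>: "0 < cmod (z - a)" using za[OF x] unfolding a_def by simp
    have r\<rho>: "1 - cmod a \<le> cmod (z - a)" using z1 norm_triangle_ineq2[of z a] by simp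
    have "Sf x \<le> Hb * cmod (z - a)" using S' r\<rho> Hb by (meson mult_left_mono order_trans)
    then have "Sf x / cmod (z - a) \<le> Hb" using \<rho> by (simp add: divide_le_eq)
    moreover have "0 \<le> Sf x / cmod (z - a)" using S \<rho> by simp
    ultimately show ?thesis unfolding a_def by (simp add: power_mono)
  qed
  have bnd: "sqn (Phi f n_as z *\<^sub>v v) \<le> Hb\<^sup>2 * sqn v" if v: "v \<in> carrier_vec ?n" for v
  proof -
    have "sqn (Phi f n_as z *\<^sub>v v) \<le> bsum fst ?\<beta> n_as v"
      unfolding Phi
    proof (rule diag_norm[OF Pc _ v])
      fix x and u :: "complex vec" assume x: "x \<in> set n_as" and u: "u \<in> carrier_vec (fst x)"
      show "sqn (?P x *\<^sub>v u) \<le> ?\<beta> x * sqn u" using Sf[OF x] z1 za[OF x] u unfolding blkprop_def by blast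
    qed
    also have "\<dots> \<le> Hb\<^sup>2 * sqn v" by (rule bsum_le[OF \<beta>le v])
    finally show ?thesis .
  qed
  have "op_norm (Phi f n_as z) \<le> Hb"
    unfolding op_norm_def
  proof (rule cSup_least)
    fix y assume "y \<in> insert 0 {vec_norm2 (Phi f n_as z *\<^sub>v v) |v. v \<in> carrier_vec (dim_col (Phi f n_as z)) \<and> vec_norm2 v = 1}"
    then consider "y = 0" | v where "y = vec_norm2 (Phi f n_as z *\<^sub>v v)" "v \<in> carrier_vec ?n" "vec_norm2 v = 1"
      using PhiC by auto
    then show "y \<le> Hb"
    proof cases
      case 1 then show ?thesis using Hb by simp
    next
      case 2
      have sv: "sqn v = 1" using 2(3) vec_norm2_sq[of v] by simp
      have "y = sqrt (sqn (Phi f n_as z *\<^sub>v v))" using 2(1) by (simp add: vec_norm2_sqn)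
      also have "\<dots> \<le> sqrt (Hb\<^sup>2)" using bnd[OF 2(2)] sv by (intro real_sqrt_le_mono) simp
      also have "\<dots> = Hb" using Hb by simp
      finally show ?thesis .
    qed
  qed simp
  then show "ereal (op_norm (Phi f n_as z)) \<le> ereal Hb" by simp
qed

lemma main_2:
  fixes f :: "complex \<Rightarrow> complex" and kf :: "nat \<Rightarrow> real" and Hb :: real
  assumes disk: "\<forall>(k, a) \<in> set n_as. cmod a \<le> 1"
    and Hb: "0 \<le> Hb"
    and Sf: "\<And>x. x \<in> set n_as \<Longrightarrow> blkprop True f Hb x (Sf x)"
  shows "H2op_norm f n_as \<le> ereal Hb"
  unfolding H2op_norm_def Let_def
proof (rule SUP_least)
  let ?n = "dsum fst n_as"
  fix v assume "v \<in> {v \<in> carrier_vec ?n. vec_norm2 v = 1}"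
  then have v: "v \<in> carrier_vec ?n" and v1: "sqn v = 1" using vec_norm2_sq[of v] by auto
  define \<beta> where "\<beta> x t = (if Sf x = 0 then 0 else (Sf x)\<^sup>2 * (1 / (cmod (cis t - snd x))\<^sup>2))" for x t
  define J where "J x = (if Sf x = 0 then 0 else (Sf x)\<^sup>2 * (2 * pi / (1 - (cmod (snd x))\<^sup>2)))" for x
  define G where "G t = bsum fst (\<lambda>x. \<beta> x t) n_as v" for t
  have \<beta>0: "0 \<le> \<beta> x t" for x t unfolding \<beta>_def by simp
  have G0: "0 \<le> G t" for t unfolding G_def by (rule bsum_nonneg) (rule \<beta>0)
  have Gint: "(G has_integral bsum fst J n_as v) {0..2*pi}"
    unfolding G_def
  proof (rule bsum_integral)
    fix x assume x: "x \<in> set n_as"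
    show "((\<lambda>t. \<beta> x t) has_integral J x) {0..2*pi}"
    proof (cases "Sf x = 0")
      case True then show ?thesis unfolding \<beta>_def J_def by simp
    next
      case False
      then have "0 < Sf x" using Sf[OF x] unfolding blkprop_def by auto
      then have a: "cmod (snd x) < 1" using Sf[OF x] unfolding blkprop_def by auto
      have I: "((\<lambda>t. (Sf x)\<^sup>2 * (1 / (cmod (cis t - snd x))\<^sup>2)) has_integral (Sf x)\<^sup>2 * (2 * pi / (1 - (cmod (snd x))\<^sup>2))) {0..2*pi}"
        by (rule has_integral_mult_right[OF poisson_integral[OF a]])
      have e1: "(\<lambda>t. \<beta> x t) = (\<lambda>t. (Sf x)\<^sup>2 * (1 / (cmod (cis t - snd x))\<^sup>2))" using False unfolding \<beta>_def by simp
      have e2: "J x = (Sf x)\<^sup>2 * (2 * pi / (1 - (cmod (snd x))\<^sup>2))" using False unfolding J_def by simp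
      show ?thesis unfolding e1 e2 by (rule I)
    qed
  qed
  have Jle: "J x \<le> 2 * pi * Hb\<^sup>2" if x: "x \<in> set n_as" for x
  proof (cases "Sf x = 0")
    case True then show ?thesis unfolding J_def by simp
  next
    case False
    define a where "a = snd x"
    have S: "0 \<le> Sf x" "Sf x \<le> Hb * (1 - cmod a) powr (1/2)" using Sf[OF x] unfolding blkprop_def a_def by auto
    then have "0 < Sf x" using False by simp
    then have a1: "cmod a < 1" using Sf[OF x] unfolding blkprop_def a_def by auto
    have "Sf x \<le> Hb * sqrt (1 - cmod a)" using S(2) a1 by (simp add: powr_half_sqrt)
    then have "(Sf x)\<^sup>2 \<le> (Hb * sqrt (1 - cmod a))\<^sup>2" using S(1) by (rule power_mono)
    also have "\<dots> = Hb\<^sup>2 * (1 - cmod a)" using a1 by (simp add: power_mult_distrib)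
    finally have S2: "(Sf x)\<^sup>2 \<le> Hb\<^sup>2 * (1 - cmod a)" .
    have den: "0 < 1 - (cmod a)\<^sup>2" using a1 by (simp add: abs_square_less_1)
    have r: "1 - cmod a \<le> 1 - (cmod a)\<^sup>2" using a1 by (simp add: power2_eq_square mult_left_le_one_le)
    have "J x = (Sf x)\<^sup>2 * (2 * pi) / (1 - (cmod a)\<^sup>2)" unfolding J_def a_def using False by simp
    also have "\<dots> \<le> Hb\<^sup>2 * (1 - cmod a) * (2 * pi) / (1 - (cmod a)\<^sup>2)"
      by (intro divide_right_mono mult_right_mono S2) (use den in auto)
    also have "\<dots> \<le> Hb\<^sup>2 * (1 - (cmod a)\<^sup>2) * (2 * pi) / (1 - (cmod a)\<^sup>2)"
      by (intro divide_right_mono mult_right_mono mult_left_mono r) (use den in auto)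
    also have "\<dots> = 2 * pi * Hb\<^sup>2" using den by simp
    finally show ?thesis .
  qed
  have bJ: "bsum fst J n_as v \<le> 2 * pi * Hb\<^sup>2" using bsum_le[OF Jle v] v1 by simp
  have pt: "ennreal (if cis t \<in> eigs n_as then 0 else (vec_norm2 (transpose_mat (Phi f n_as (cis t)) *\<^sub>v v))\<^sup>2)
      \<le> ennreal (G t)" for t
  proof (cases "cis t \<in> eigs n_as")
    case True then show ?thesis using G0[of t] by simp
  next
    case False
    let ?z = "cis t"
    have z1: "cmod ?z = 1" by simp
    have za: "\<And>x. x \<in> set n_as \<Longrightarrow> ?z \<noteq> snd x" using False unfolding eigs_def by force
    let ?P = "\<lambda>x. jordan_block_fun f (fst x) (snd x) * Qb (fst x) (snd x) ?z"
    have Pc: "\<And>x. ?P x \<in> carrier_mat (fst x) (fst x)"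
      using jordan_block_fun_carrier Qb_carrier by (rule mult_carrier_mat)
    have Phi: "transpose_mat (Phi f n_as ?z) = diag_block_mat (map (\<lambda>x. transpose_mat (?P x)) n_as)"
      unfolding Phi_diag[OF False] by (rule diag_transpose) (rule Pc)
    have "sqn (transpose_mat (Phi f n_as ?z) *\<^sub>v v) \<le> G t"
      unfolding Phi G_def
    proof (rule diag_norm[OF _ _ v])
      fix x assume "x \<in> set n_as"
      show "transpose_mat (?P x) \<in> carrier_mat (fst x) (fst x)" using Pc[of x] by simp
    next
      fix x and u :: "complex vec" assume x: "x \<in> set n_as" and u: "u \<in> carrier_vec (fst x)"
      have "sqn (transpose_mat (?P x) *\<^sub>v u) \<le> (Sf x / cmod (?z - snd x))\<^sup>2 * sqn u"
        using Sf[OF x] z1 za[OF x] u unfolding blkprop_def by blast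
      also have "(Sf x / cmod (?z - snd x))\<^sup>2 = \<beta> x t"
        unfolding \<beta>_def by (simp add: power_divide)
      finally show "sqn (transpose_mat (?P x) *\<^sub>v u) \<le> \<beta> x t * sqn u" .
    qed
    then show ?thesis using False by (simp add: vec_norm2_sq ennreal_leI)
  qed
  have "(\<integral>\<^sup>+ t. ennreal (if cis t \<in> eigs n_as then 0 else (vec_norm2 (transpose_mat (Phi f n_as (cis t)) *\<^sub>v v))\<^sup>2)
          \<partial>lebesgue_on {0..2*pi}) \<le> (\<integral>\<^sup>+ t. ennreal (G t) \<partial>lebesgue_on {0..2*pi})"
    by (rule nn_integral_mono) (rule pt)
  also have "\<dots> = ennreal (bsum fst J n_as v)" by (rule nn_integral_on_interval[OF _ Gint]) (rule G0)
  also have "\<dots> \<le> ennreal (2 * pi * Hb\<^sup>2)" using bJ by simp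
  finally have I: "(\<integral>\<^sup>+ t. ennreal (if cis t \<in> eigs n_as then 0 else (vec_norm2 (transpose_mat (Phi f n_as (cis t)) *\<^sub>v v))\<^sup>2)
          \<partial>lebesgue_on {0..2*pi}) \<le> ennreal (2 * pi * Hb\<^sup>2)" .
  have "ennreal (1 / (2 * pi)) * (\<integral>\<^sup>+ t. ennreal (if cis t \<in> eigs n_as then 0 else (vec_norm2 (transpose_mat (Phi f n_as (cis t)) *\<^sub>v v))\<^sup>2)
          \<partial>lebesgue_on {0..2*pi}) \<le> ennreal (1 / (2 * pi)) * ennreal (2 * pi * Hb\<^sup>2)"
    by (rule mult_left_mono[OF I]) simp
  also have "\<dots> = ennreal (Hb\<^sup>2)" by (simp add: ennreal_mult[symmetric])
  finally show "esqrt (ennreal (1 / (2 * pi)) * (\<integral>\<^sup>+ t. ennreal (if cis t \<in> eigs n_as then 0 else (vec_norm2 (transpose_mat (Phi f n_as (cis t)) *\<^sub>v v))\<^sup>2)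
          \<partial>lebesgue_on {0..2*pi})) \<le> ereal Hb"
    by (rule esqrt_le[OF _ Hb])
qed

lemma H_cases:
  fixes H :: ereal
  assumes "H = H_bound e kf f (blkspec n_as)"
  obtains "H = \<infinity>" | Hb where "H = ereal Hb" "0 \<le> Hb" "\<And>x. x \<in> set n_as \<Longrightarrow> h_term e kf f (snd x, fst x) \<le> ereal Hb"
proof -
  have H0: "0 \<le> H" unfolding assms H_bound_def by (rule Sup_upper) simp
  have hx: "h_term e kf f (snd x, fst x) \<le> H" if "x \<in> set n_as" for x
  proof -
    have "(snd x, fst x) \<in> blkspec n_as" using that unfolding blkspec_def by auto
    then show ?thesis unfolding assms H_bound_def by (intro Sup_upper) auto
  qed
  show ?thesis
  proof (cases "H = \<infinity>")
    case True then show ?thesis using that(1) by blast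
  next
    case False
    have Hr: "H = ereal (real_of_ereal H)" using False H0 by (cases H) auto
    have "0 \<le> real_of_ereal H" using H0 by (simp add: real_of_ereal_pos)
    then show ?thesis using that(2)[of "real_of_ereal H"] Hr hx by metis
  qed
qed

lemma main:
  fixes f :: "complex \<Rightarrow> complex" and kf :: "nat \<Rightarrow> real"
  assumes entire: "f holomorphic_on UNIV"
    and jnf: "0 \<notin> fst ` set n_as"
    and disk: "\<forall>(k, a) \<in> set n_as. cmod a \<le> 1"
    and card: "\<And>x i. x \<in> set n_as \<Longrightarrow> i < fst x \<Longrightarrow>
        real (card {l. l < fst x \<and> i \<le> l \<and> (deriv ^^ (l - i)) f (snd x) \<noteq> 0}) * real (fst x) \<le> kf (fst x)"
    and kfpos: "\<And>x. x \<in> set n_as \<Longrightarrow> 0 < kf (fst x)"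
  shows "Hinf_norm f n_as \<le> H_bound False kf f (blkspec n_as) \<and> H2op_norm f n_as \<le> H_bound True kf f (blkspec n_as)"
proof
  show "Hinf_norm f n_as \<le> H_bound False kf f (blkspec n_as)"
  proof (cases rule: H_cases[OF refl, of False kf f n_as])
    case 1 then show ?thesis by simp
  next
    case (2 Hb)
    obtain Sf where Sf: "\<And>x. x \<in> set n_as \<Longrightarrow> blkprop False f Hb x (Sf x)"
      using blk_all[OF entire jnf disk card kfpos 2(3)] by blast
    show ?thesis unfolding 2(1) by (rule main_inf[OF disk 2(2) Sf])
  qed
  show "H2op_norm f n_as \<le> H_bound True kf f (blkspec n_as)"
  proof (cases rule: H_cases[OF refl, of True kf f n_as])
    case 1 then show ?thesis by simp
  next
    case (2 Hb)
    obtain Sf where Sf: "\<And>x. x \<in> set n_as \<Longrightarrow> blkprop True f Hb x (Sf x)"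
      using blk_all[OF entire jnf disk card kfpos 2(3)] by blast
    show ?thesis unfolding 2(1) by (rule main_2[OF disk 2(2) Sf])
  qed
qed

lemma deriv_poly_funpow: "(deriv ^^ m) (poly p) = poly ((pderiv ^^ m) (p :: complex poly))"
proof (induct m)
  case 0 then show ?case by simp
next
  case (Suc m)
  have "deriv (poly q) = poly (pderiv q)" for q :: "complex poly"
    by (rule ext) (rule DERIV_imp_deriv[OF poly_DERIV])
  then show ?case using Suc by simp
qed

lemma pderiv_funpow_zero: "degree p < m \<Longrightarrow> (pderiv ^^ m) (p :: complex poly) = 0"
  by (intro poly_eqI) (simp add: coeff_higher_pderiv coeff_eq_0)

lemma card_le_k: "card {l. l < k \<and> P l} \<le> k"
proof -
  have "card {l. l < k \<and> P l} \<le> card {..<k}" by (rule card_mono) auto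
  then show ?thesis by simp
qed

lemma card_le_poly:
  fixes p :: "complex poly"
  assumes "degree p \<le> d"
  shows "card {l. l < k \<and> i \<le> l \<and> (deriv ^^ (l - i)) (poly p) a \<noteq> 0} \<le> d + 1"
proof -
  have "{l. l < k \<and> i \<le> l \<and> (deriv ^^ (l - i)) (poly p) a \<noteq> 0} \<subseteq> {i..i + d}"
  proof
    fix l assume l: "l \<in> {l. l < k \<and> i \<le> l \<and> (deriv ^^ (l - i)) (poly p) a \<noteq> 0}"
    have "\<not> degree p < l - i"
    proof
      assume "degree p < l - i"
      then have "(pderiv ^^ (l - i)) p = 0" by (rule pderiv_funpow_zero)
      then show False using l by (simp add: deriv_poly_funpow)
    qed
    then show "l \<in> {i..i + d}" using l assms by auto
  qed
  then have "card {l. l < k \<and> i \<le> l \<and> (deriv ^^ (l - i)) (poly p) a \<noteq> 0} \<le> card {i..i + d}"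
    by (rule card_mono[rotated]) simp
  then show ?thesis by simp
qed

theorem proposition18:
  fixes f :: "complex \<Rightarrow> complex" and n_as :: "(nat \<times> complex) list"
  assumes entire: "f holomorphic_on UNIV"
    and jnf: "0 \<notin> fst ` set n_as"
    and disk: "\<forall>(k, a) \<in> set n_as. cmod a \<le> 1"
  shows "Hinf_norm f n_as \<le> H_bound False (\<lambda>k. real k ^ 2) f (blkspec n_as)
       \<and> H2op_norm f n_as \<le> H_bound True (\<lambda>k. real k ^ 2) f (blkspec n_as)
       \<and> (\<forall>(p :: complex poly) (d :: nat). f = poly p \<and> degree p \<le> d \<longrightarrow>
            (let kf = (\<lambda>k. if d < k then real k * real (d + 1) else real k ^ 2) in
              Hinf_norm f n_as \<le> H_bound False kf f (blkspec n_as)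
            \<and> H2op_norm f n_as \<le> H_bound True kf f (blkspec n_as)))"
proof -
  have kpos: "\<And>x. x \<in> set n_as \<Longrightarrow> 0 < fst x" using jnf by (metis gr0I image_eqI)
  have A: "Hinf_norm f n_as \<le> H_bound False (\<lambda>k. real k ^ 2) f (blkspec n_as)
       \<and> H2op_norm f n_as \<le> H_bound True (\<lambda>k. real k ^ 2) f (blkspec n_as)"
  proof (rule main[OF entire jnf disk])
    fix x i
    have "real (card {l. l < fst x \<and> i \<le> l \<and> (deriv ^^ (l - i)) f (snd x) \<noteq> 0}) \<le> real (fst x)"
      using card_le_k[of "fst x"] by simp
    then show "real (card {l. l < fst x \<and> i \<le> l \<and> (deriv ^^ (l - i)) f (snd x) \<noteq> 0}) * real (fst x) \<le> real (fst x) ^ 2"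
      by (simp add: power2_eq_square mult_right_mono)
  next
    fix x assume "x \<in> set n_as"
    then show "0 < real (fst x) ^ 2" using kpos by simp
  qed
  have B: "\<forall>(p :: complex poly) (d :: nat). f = poly p \<and> degree p \<le> d \<longrightarrow>
            (let kf = (\<lambda>k. if d < k then real k * real (d + 1) else real k ^ 2) in
              Hinf_norm f n_as \<le> H_bound False kf f (blkspec n_as)
            \<and> H2op_norm f n_as \<le> H_bound True kf f (blkspec n_as))"
  proof (intro allI impI)
    fix p :: "complex poly" and d :: nat
    assume pd: "f = poly p \<and> degree p \<le> d"
    show "let kf = (\<lambda>k. if d < k then real k * real (d + 1) else real k ^ 2) in
              Hinf_norm f n_as \<le> H_bound False kf f (blkspec n_as)
            \<and> H2op_norm f n_as \<le> H_bound True kf f (blkspec n_as)"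
      unfolding Let_def
    proof (rule main[OF entire jnf disk])
      fix x i
      let ?c = "card {l. l < fst x \<and> i \<le> l \<and> (deriv ^^ (l - i)) f (snd x) \<noteq> 0}"
      have c1: "?c \<le> fst x" by (rule card_le_k)
      have c2: "?c \<le> d + 1" using card_le_poly[of p d] pd by simp
      show "real ?c * real (fst x) \<le> (if d < fst x then real (fst x) * real (d + 1) else real (fst x) ^ 2)"
      proof (cases "d < fst x")
        case True
        have "real ?c * real (fst x) \<le> real (d + 1) * real (fst x)"
          using c2 by (intro mult_right_mono) auto
        then show ?thesis using True by (simp add: mult.commute)
      next
        case False
        have "real ?c * real (fst x) \<le> real (fst x) * real (fst x)"
          using c1 by (intro mult_right_mono) auto
        then show ?thesis using False by (simp add: power2_eq_square)
      qed
    next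
      fix x assume "x \<in> set n_as"
      then show "0 < (if d < fst x then real (fst x) * real (d + 1) else real (fst x) ^ 2)" using kpos by simp
    qed
  qed
  show ?thesis using A B by blast
qed

end
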